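(* There is $q_0$ such that the following holds for every prime power $q\ge q_0$. Let $G$ be a graph on $n=q^2(q^2-q+1)$ vertices such that every set $X\subseteq V(G)$ with $|X|\ge 2^{24}q^2$ satisfies $e(G[X])\ge |X|^2/(256q)$. Then, with $t=\lceil 2^{30}q\log^2 q\rceil$, the number of independent sets of size $t$ in $G$ is at most $(q/\log^2 q)^t$.
   Context: $e(G[X])$ denotes the number of edges of the subgraph of $G$ induced by $X$. Logarithms are natural. *)

theory Defs
  imports "HOL-Analysis.Analysis" "HOL-Number_Theory.Prime_Powers"
begin

definition simple_graph :: "'a set \<Rightarrow> ('a \<Rightarrow> 'a \<Rightarrow> bool) \<Rightarrow> bool" where
  "simple_graph V E \<longleftrightarrow> finite V \<and> (\<forall>u v. E u v \<longrightarrow> u \<in> V \<and> v \<in> V)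
     \<and> (\<forall>u v. E u v \<longrightarrow> E v u) \<and> (\<forall>v. \<not> E v v)"

definition edges_in :: "('a \<Rightarrow> 'a \<Rightarrow> bool) \<Rightarrow> 'a set \<Rightarrow> nat" where
  "edges_in E X = card {{u, v} | u v. u \<in> X \<and> v \<in> X \<and> E u v}"

definition independent_set :: "'a set \<Rightarrow> ('a \<Rightarrow> 'a \<Rightarrow> bool) \<Rightarrow> 'a set \<Rightarrow> bool" where
  "independent_set V E S \<longleftrightarrow> S \<subseteq> V \<and> (\<forall>u\<in>S. \<forall>v\<in>S. \<not> E u v)"

end

theory Submission imports Defs begin

definition IS :: "('a \<Rightarrow> 'a \<Rightarrow> bool) \<Rightarrow> 'a set \<Rightarrow> nat \<Rightarrow> 'a set set" where
  "IS E A k = {S. S \<subseteq> A \<and> (\<forall>u\<in>S. \<forall>v\<in>S. \<not> E u v) \<and> card S = k}"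

lemma IS_finite: "finite A \<Longrightarrow> finite (IS E A k)"
  by (rule finite_subset[of _ "Pow A"]) (auto simp: IS_def)

lemma IS_le_binom: "finite A \<Longrightarrow> card (IS E A k) \<le> card A choose k"
proof -
  assume f: "finite A"
  have "card (IS E A k) \<le> card {B. B \<subseteq> A \<and> card B = k}"
    by (rule card_mono) (auto simp: IS_def f)
  thus ?thesis using n_subsets[OF f] by simp
qed

lemma IS_zero: "finite A \<Longrightarrow> card (IS E A 0) \<le> 1"
proof -
  assume f: "finite A"
  have "IS E A 0 \<subseteq> {{}}" using f by (auto simp: IS_def) (metis card_eq_0_iff finite_subset empty_iff)
  thus ?thesis using card_mono[of "{{}}" "IS E A 0"] by simp
qed

lemma IS_split:
  assumes f: "finite A" and v: "v \<in> A" and k: "k \<ge> 1"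
  shows "card (IS E A k) \<le> card (IS E (A - {v}) k) + card (IS E (A - {v} - {u. E v u}) (k - 1))"
proof -
  have "IS E A k \<subseteq> IS E (A - {v}) k \<union> insert v ` IS E (A - {v} - {u. E v u}) (k - 1)"
  proof
    fix S assume S: "S \<in> IS E A k"
    show "S \<in> IS E (A - {v}) k \<union> insert v ` IS E (A - {v} - {u. E v u}) (k - 1)"
    proof (cases "v \<in> S")
      case False thus ?thesis using S by (auto simp: IS_def)
    next
      case True
      have fS: "finite S" using S f by (auto simp: IS_def intro: finite_subset)
      have "S - {v} \<in> IS E (A - {v} - {u. E v u}) (k - 1)"
        using S True fS by (auto simp: IS_def)
      moreover have "S = insert v (S - {v})" using True by auto
      ultimately show ?thesis by blast
    qed
  qed
  hence "card (IS E A k) \<le> card (IS E (A - {v}) k \<union> insert v ` IS E (A - {v} - {u. E v u}) (k - 1))"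
    using IS_finite[of "A - {v} - {u. E v u}" E "k-1"] IS_finite[of "A - {v}" E k] f
    by (intro card_mono) auto
  also have "\<dots> \<le> card (IS E (A - {v}) k) + card (insert v ` IS E (A - {v} - {u. E v u}) (k - 1))"
    by (rule card_Un_le)
  also have "\<dots> \<le> card (IS E (A - {v}) k) + card (IS E (A - {v} - {u. E v u}) (k - 1))"
    using card_image_le[OF IS_finite[of "A - {v} - {u. E v u}" E "k-1"]] f by simp
  finally show ?thesis .
qed

lemma edges_le_deg:
  assumes f: "finite X"
  shows "edges_in E X \<le> (\<Sum>u\<in>X. card {v\<in>X. E u v})"
proof -
  have "{{u, v} | u v. u \<in> X \<and> v \<in> X \<and> E u v} = (\<lambda>(u,v). {u,v}) ` (SIGMA u:X. {v\<in>X. E u v})"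
    by auto
  hence "edges_in E X = card ((\<lambda>(u,v). {u,v}) ` (SIGMA u:X. {v\<in>X. E u v}))"
    by (simp add: edges_in_def)
  also have "\<dots> \<le> card (SIGMA u:X. {v\<in>X. E u v})"
    by (rule card_image_le) (use f in auto)
  also have "\<dots> = (\<Sum>u\<in>X. card {v\<in>X. E u v})" using f by simp
  finally show ?thesis .
qed

lemma exists_deg:
  assumes f: "finite X" and ne: "X \<noteq> {}"
  shows "\<exists>v\<in>X. edges_in E X \<le> card X * card {u\<in>X. E v u}"
proof -
  let ?d = "\<lambda>u. card {v\<in>X. E u v}"
  have "?d ` X \<noteq> {}" "finite (?d ` X)" using f ne by auto
  then have "Max (?d ` X) \<in> ?d ` X" by (intro Max_in) auto
  then obtain w where w: "w \<in> X" "?d w = Max (?d ` X)" by auto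
  have "\<forall>u\<in>X. ?d u \<le> ?d w" using w f by auto
  hence "(\<Sum>u\<in>X. ?d u) \<le> card X * ?d w" using sum_bounded_above[of X ?d "?d w"] by simp
  thus ?thesis using edges_le_deg[OF f, of E] w by (intro bexI[of _ w]) auto
qed

lemma core:
  fixes V :: "'a set" and E and \<delta> :: real and mm :: nat
  assumes fV: "finite V" and dpos: "0 < \<delta>" and d1: "\<delta> \<le> 1" and mpos: "mm > 0"
    and deg: "\<forall>X\<subseteq>V. real (card X) \<ge> real mm \<longrightarrow> (\<exists>v\<in>X. real (card {u\<in>X. E v u}) \<ge> \<delta> * real (card X))"
    and irr: "\<forall>v. \<not> E v v"
  shows "\<forall>A k. A \<subseteq> V \<longrightarrow> real (card A) * (1-\<delta>)^s < real mm \<longrightarrow>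
      card (IS E A k) \<le> (card A + 1)^s * (\<Sum>j\<le>k. mm choose j)"
proof (induction s)
  case 0
  show ?case
  proof (intro allI impI)
    fix A k assume A: "A \<subseteq> V" "real (card A) * (1-\<delta>)^0 < real mm"
    have fA: "finite A" using A fV finite_subset by auto
    have "card (IS E A k) \<le> card A choose k" by (rule IS_le_binom[OF fA])
    also have "\<dots> \<le> mm choose k" using A by (intro binomial_right_mono) simp
    also have "\<dots> \<le> (\<Sum>j\<le>k. mm choose j)" by (rule member_le_sum) auto
    finally show "card (IS E A k) \<le> (card A + 1)^0 * (\<Sum>j\<le>k. mm choose j)" by simp
  qed
next
  case (Suc s)
  let ?B = "\<lambda>k. (\<Sum>j\<le>k. mm choose j)"
  have Bmono: "?B (k - 1) \<le> ?B k" for k by (intro sum_mono2) auto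
  have d0: "0 \<le> 1 - \<delta>" using d1 by simp
  have main: "\<forall>A k. card A = n \<longrightarrow> A \<subseteq> V \<longrightarrow> real (card A) * (1-\<delta>)^Suc s < real mm \<longrightarrow>
      card (IS E A k) \<le> (card A + 1)^Suc s * ?B k" for n
  proof (induction n rule: less_induct)
    case (less n)
    show ?case
    proof (intro allI impI)
      fix A k assume cA: "card A = n" and AV: "A \<subseteq> V" and lt: "real (card A) * (1-\<delta>)^Suc s < real mm"
      have fA: "finite A" using AV fV finite_subset by auto
      show "card (IS E A k) \<le> (card A + 1)^Suc s * ?B k"
      proof (cases "real (card A) * (1-\<delta>)^s < real mm")
        case True
        hence "card (IS E A k) \<le> (card A + 1)^s * ?B k" using Suc.IH AV by blast
        also have "\<dots> \<le> (card A + 1)^Suc s * ?B k" by (intro mult_right_mono power_increasing) auto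
        finally show ?thesis .
      next
        case False
        have "(1-\<delta>)^s \<le> 1" using d0 d1 dpos by (intro power_le_one) auto
        hence "real (card A) * (1-\<delta>)^s \<le> real (card A)" by (simp add: mult_left_le)
        hence big: "real (card A) \<ge> real mm" using False by linarith
        then obtain v where v: "v \<in> A" "real (card {u\<in>A. E v u}) \<ge> \<delta> * real (card A)"
          using deg AV by blast
        show ?thesis
        proof (cases "k = 0")
          case True
          have "card (IS E A k) \<le> 1" using IS_zero[OF fA] True by simp
          also have "1 \<le> (card A + 1)^Suc s * ?B k" using True by (simp add: Suc_le_eq)
          finally show ?thesis .
        next
          case False
          let ?A1 = "A - {v}" and ?A2 = "A - {v} - {u. E v u}"
          have split: "card (IS E A k) \<le> card (IS E ?A1 k) + card (IS E ?A2 (k - 1))"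
            using IS_split[OF fA v(1)] False by simp
          have c1: "card ?A1 + 1 = card A" using v fA
            by (metis One_nat_def Suc_pred card_Diff_singleton card_gt_0_iff empty_iff add.commute plus_1_eq_Suc)
          have "real (card ?A1) * (1-\<delta>)^Suc s \<le> real (card A) * (1-\<delta>)^Suc s"
            using c1 d0 by (intro mult_right_mono) auto
          hence lt1: "real (card ?A1) * (1-\<delta>)^Suc s < real mm" using lt by linarith
          have "card ?A1 < n" using c1 cA by simp
          hence "card (IS E ?A1 k) \<le> (card ?A1 + 1)^Suc s * ?B k"
            using less.IH[of "card ?A1"] AV lt1 by blast
          hence b1: "card (IS E ?A1 k) \<le> (card A)^Suc s * ?B k" using c1 by (metis add.commute)
          have eq2: "?A2 = A - insert v {u\<in>A. E v u}" by auto
          have "card ?A2 = card A - card (insert v {u\<in>A. E v u})"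
            unfolding eq2 by (rule card_Diff_subset) (use fA v in auto)
          moreover have "card (insert v {u\<in>A. E v u}) = card {u\<in>A. E v u} + 1"
            using irr fA by (subst card_insert_disjoint) auto
          moreover have "card (insert v {u\<in>A. E v u}) \<le> card A"
            using fA v by (intro card_mono) auto
          ultimately have c2: "card ?A2 + card {u\<in>A. E v u} + 1 = card A" by linarith
          hence "real (card ?A2) \<le> real (card A) * (1 - \<delta>)" using v(2)
            by (simp add: algebra_simps)
          hence "real (card ?A2) * (1-\<delta>)^s \<le> real (card A) * (1 - \<delta>) * (1-\<delta>)^s"
            using d0 by (intro mult_right_mono) auto
          hence "real (card ?A2) * (1-\<delta>)^s < real mm" using lt by (simp add: algebra_simps)
          moreover have "?A2 \<subseteq> V" using AV by auto
          ultimately have "card (IS E ?A2 (k-1)) \<le> (card ?A2 + 1)^s * ?B (k-1)"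
            using Suc.IH by blast
          also have "\<dots> \<le> (card A)^s * ?B k"
            using c2 Bmono by (intro mult_mono power_mono) auto
          finally have b2: "card (IS E ?A2 (k-1)) \<le> (card A)^s * ?B k" .
          have "card (IS E A k) \<le> ((card A)^Suc s + (card A)^s) * ?B k"
            using split b1 b2 by (simp add: algebra_simps)
          also have "(card A)^Suc s + (card A)^s \<le> (card A + 1)^Suc s"
          proof -
            have "(card A)^Suc s + (card A)^s = (card A + 1) * (card A)^s" by simp
            also have "\<dots> \<le> (card A + 1) * (card A + 1)^s" by (intro mult_left_mono power_mono) auto
            finally show ?thesis by simp
          qed
          hence "((card A)^Suc s + (card A)^s) * ?B k \<le> (card A + 1)^Suc s * ?B k"
            by (rule mult_right_mono) auto
          finally show ?thesis .
        qed
      qed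
    qed
  qed
  show ?case using main by blast
qed

lemma binom_sum_bound:
  fixes mm t :: nat
  assumes t0: "0 < t" and tm: "t \<le> mm"
  shows "real (\<Sum>j\<le>t. mm choose j) \<le> (exp 1 * real mm / real t)^t"
proof -
  define x where "x = real t / real mm"
  have x0: "0 < x" and x1: "x \<le> 1" using t0 tm by (auto simp: x_def)
  have "real (\<Sum>j\<le>t. mm choose j) * x^t = (\<Sum>j\<le>t. real (mm choose j) * x^t)"
    by (simp add: sum_distrib_right)
  also have "\<dots> \<le> (\<Sum>j\<le>t. real (mm choose j) * x^j)"
    using x0 x1 by (intro sum_mono mult_left_mono power_decreasing) auto
  also have "\<dots> \<le> (\<Sum>j\<le>mm. real (mm choose j) * x^j)"
    using tm x0 by (intro sum_mono2) auto
  also have "\<dots> = (x + 1)^mm" by (simp add: binomial_ring)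
  also have "\<dots> \<le> exp x ^ mm"
    using x0 by (intro power_mono) (auto simp: add.commute)
  also have "\<dots> = exp (real mm * x)" by (simp add: exp_of_nat_mult)
  also have "\<dots> = exp 1 ^ t" using tm t0 by (simp add: x_def flip: exp_of_nat_mult)
  finally have h: "real (\<Sum>j\<le>t. mm choose j) * x^t \<le> exp 1 ^ t" .
  have "(exp 1 * real mm / real t)^t = exp 1 ^ t / x^t"
    using t0 tm by (simp add: x_def power_divide power_mult_distrib)
  thus ?thesis using h x0 by (simp add: pos_le_divide_eq)
qed

theorem mainTheorem10:
  shows "\<exists>q0::nat. \<forall>q::nat. q \<ge> q0 \<longrightarrow> primepow q \<longrightarrow>
    (\<forall>(V::nat set) E. simple_graph V E \<longrightarrow> card V = q^2 * (q^2 - q + 1) \<longrightarrow>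
      (\<forall>X\<subseteq>V. real (card X) \<ge> 2^24 * real q^2 \<longrightarrow>
          real (edges_in E X) \<ge> real (card X)^2 / (256 * real q)) \<longrightarrow>
      (let t = nat \<lceil>2^30 * real q * (ln (real q))^2\<rceil> in
        real (card {S. independent_set V E S \<and> card S = t})
          \<le> (real q / (ln (real q))^2) ^ t))"
proof (intro exI[of _ 3] allI impI)
  fix q :: nat and V :: "nat set" and E
  assume q3: "3 \<le> q" and "primepow q" and sg: "simple_graph V E"
    and cV: "card V = q^2 * (q^2 - q + 1)"
    and hyp: "\<forall>X\<subseteq>V. real (card X) \<ge> 2^24 * real q^2 \<longrightarrow>
          real (edges_in E X) \<ge> real (card X)^2 / (256 * real q)"
  define L where "L = (ln (real q))^2"
  define t where "t = nat \<lceil>2^30 * real q * L\<rceil>"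
  define mm :: nat where "mm = 2^24 * q^2"
  define \<delta> :: real where "\<delta> = 1 / (256 * real q)"
  have fV: "finite V" and irr: "\<forall>v. \<not> E v v" using sg by (auto simp: simple_graph_def)
  have qpos: "(0::real) < real q" using q3 by simp
  have lnq: "1 \<le> ln (real q)"
  proof -
    have "exp 1 \<le> real q" using exp_le q3 by linarith
    thus ?thesis using qpos by (metis ln_exp ln_le_cancel_iff exp_gt_zero)
  qed
  have L1: "1 \<le> L" unfolding L_def using lnq by (simp add: one_le_power)
  have lnL: "ln (real q) \<le> L" unfolding L_def using lnq by (simp add: power2_eq_square)
  have tge: "real t \<ge> 2^30 * real q * L" unfolding t_def by linarith
  have "0 < 2^30 * real q * L" using qpos L1 by simp
  hence tpos: "0 < t" using tge by linarith
  have mmr: "real mm = 2^24 * real q^2" by (simp add: mm_def)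
  have IS_eq: "{S. independent_set V E S \<and> card S = t} = IS E V t"
    by (simp add: IS_def independent_set_def)
  have goal: "real (card (IS E V t)) \<le> (real q / L) ^ t"
  proof (cases "mm < t")
    case True
    have "IS E V t = {}"
    proof (rule ccontr)
      assume "IS E V t \<noteq> {}"
      then obtain S where S: "S \<subseteq> V" "\<forall>u\<in>S. \<forall>v\<in>S. \<not> E u v" "card S = t"
        by (auto simp: IS_def)
      have "real (card S) \<ge> 2^24 * real q^2" using S True mmr
        by (metis less_imp_le of_nat_le_iff)
      hence "real (edges_in E S) \<ge> real (card S)^2 / (256 * real q)" using hyp S by blast
      moreover have "edges_in E S = 0"
      proof -
        have e: "{{u, v} |u v. u \<in> S \<and> v \<in> S \<and> E u v} = {}" using S(2) by blast
        show ?thesis unfolding edges_in_def e by simp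
      qed
      moreover have "real (card S)^2 / (256 * real q) > 0" using S tpos qpos by simp
      ultimately show False by simp
    qed
    thus ?thesis using qpos L1 by simp
  next
    case False
    hence tm: "t \<le> mm" by simp
    define s0 where "s0 = nat \<lceil>512 * real q * ln (real q)\<rceil>"
    have s0ge: "real s0 \<ge> 512 * real q * ln (real q)" unfolding s0_def by linarith
    have s0le: "real s0 \<le> 512 * real q * ln (real q) + 1" unfolding s0_def
      using qpos lnq by (simp add: of_nat_nat)
    have mmpos: "mm > 0" using q3 by (simp add: mm_def)
    have d0: "0 < \<delta>" "\<delta> \<le> 1" using q3 by (auto simp: \<delta>_def)
    have deg: "\<forall>X\<subseteq>V. real (card X) \<ge> real mm \<longrightarrow> (\<exists>v\<in>X. real (card {u\<in>X. E v u}) \<ge> \<delta> * real (card X))"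
    proof (intro allI impI)
      fix X assume XV: "X \<subseteq> V" and cX: "real (card X) \<ge> real mm"
      have fX: "finite X" using XV fV finite_subset by auto
      have cXp: "0 < real (card X)" using cX mmpos by linarith
      hence ne: "X \<noteq> {}" by auto
      obtain v where v: "v \<in> X" "edges_in E X \<le> card X * card {u\<in>X. E v u}"
        using exists_deg[OF fX ne] by blast
      have "real (card X)^2 / (256 * real q) \<le> real (edges_in E X)" using hyp XV cX mmr by auto
      also have "\<dots> \<le> real (card X) * real (card {u\<in>X. E v u})" using v(2) by (metis of_nat_le_iff of_nat_mult)
      finally have "real (card X) * (real (card X) / (256 * real q)) \<le> real (card X) * real (card {u\<in>X. E v u})"
        by (simp add: power2_eq_square)
      hence "real (card X) / (256 * real q) \<le> real (card {u\<in>X. E v u})" using cXp mult_le_cancel_left_pos by blast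
      thus "\<exists>v\<in>X. real (card {u\<in>X. E v u}) \<ge> \<delta> * real (card X)" using v(1)
        by (intro bexI[of _ v]) (auto simp: \<delta>_def)
    qed
    have cVle: "card V \<le> q^4"
    proof -
      have "q \<le> q^2" using q3 by (simp add: power2_eq_square)
      hence "q^2 - q + 1 \<le> q^2" using q3 by linarith
      hence "card V \<le> q^2 * q^2" unfolding cV by (intro mult_left_mono) auto
      thus ?thesis by (simp add: power_add[symmetric])
    qed
    have s0cond: "real (card V) * (1-\<delta>)^s0 < real mm"
    proof -
      have "(1-\<delta>)^s0 \<le> exp (-\<delta>)^s0"
        using d0 exp_ge_add_one_self[of "-\<delta>"] by (intro power_mono) auto
      also have "\<dots> = exp (- (\<delta> * real s0))" by (simp add: exp_of_nat_mult[symmetric] algebra_simps)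
      also have "\<dots> \<le> exp (- (2 * ln (real q)))"
      proof -
        have "\<delta> * real s0 \<ge> \<delta> * (512 * real q * ln (real q))" using s0ge d0 by (intro mult_left_mono) auto
        also have "\<delta> * (512 * real q * ln (real q)) = 2 * ln (real q)" using qpos by (simp add: \<delta>_def)
        finally show ?thesis by simp
      qed
      also have "\<dots> = 1 / real q^2"
      proof -
        have "exp (2 * ln (real q)) = exp (ln (real q))^2" using exp_of_nat_mult[of 2 "ln (real q)"] by simp
        also have "\<dots> = real q^2" using qpos by simp
        finally show ?thesis by (simp add: exp_minus inverse_eq_divide)
      qed
      finally have h: "(1-\<delta>)^s0 \<le> 1 / real q^2" .
      have "real (card V) * (1-\<delta>)^s0 \<le> real q^4 * (1 / real q^2)"
        using cVle h d0 by (intro mult_mono) (auto simp: of_nat_le_iff[symmetric])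
      also have "\<dots> = real q^2" using qpos by (simp add: power2_eq_square power4_eq_xxxx)
      also have "\<dots> < real mm" using mmr qpos by simp
      finally show ?thesis .
    qed
    have "card (IS E V t) \<le> (card V + 1)^s0 * (\<Sum>j\<le>t. mm choose j)"
      using core[OF fV d0 mmpos deg irr, of s0] s0cond by blast
    hence "real (card (IS E V t)) \<le> real (card V + 1)^s0 * real (\<Sum>j\<le>t. mm choose j)"
      by (metis of_nat_le_iff of_nat_mult of_nat_power)
    also have "\<dots> \<le> (real q ^ 5) ^ s0 * (exp 1 * real mm / real t)^t"
    proof (intro mult_mono power_mono binom_sum_bound[OF tpos tm])
      have "card V + 1 \<le> q^5"
      proof -
        have "1 \<le> q^4" using q3 by simp
        moreover have "q^4 * 3 \<le> q^4 * q" using q3 by (intro mult_left_mono) auto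
        ultimately have "q^4 + 1 \<le> q^4 * q" by linarith
        moreover have "q^4 * q = q^5" by (simp add: power_Suc2[symmetric] del: power_Suc)
        ultimately show ?thesis using cVle by linarith
      qed
      thus "real (card V + 1) \<le> real q ^ 5" by (metis of_nat_le_iff of_nat_power)
    qed (auto intro: sum_nonneg)
    also have "\<dots> \<le> 16^t * ((1/16) * (real q / L))^t"
    proof (intro mult_mono)
      have "ln ((real q ^ 5) ^ s0) = 5 * real s0 * ln (real q)" using qpos by (simp add: ln_realpow)
      also have "\<dots> \<le> 5 * (512 * real q * ln (real q) + 1) * ln (real q)"
        using s0le lnq by (intro mult_right_mono mult_left_mono) auto
      also have "\<dots> = 2560 * real q * L + 5 * ln (real q)" by (simp add: L_def power2_eq_square algebra_simps)
      also have "\<dots> \<le> 2565 * real q * L"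
      proof -
        have "L \<le> real q * L" using q3 L1 mult_right_mono[of 1 "real q" L] by simp
        thus ?thesis using lnL by (simp add: algebra_simps)
      qed
      also have "\<dots> \<le> real t * 2"
      proof -
        have "0 \<le> real q * L" using qpos L1 by simp
        thus ?thesis using tge by (simp add: algebra_simps)
      qed
      also have "\<dots> \<le> real t * ln 16"
      proof -
        have "exp 1 \<le> (4::real)" using exp_le by simp
        hence "1 \<le> ln (4::real)" by (metis ln_exp ln_le_cancel_iff exp_gt_zero zero_less_numeral)
        moreover have "ln (16::real) = 2 * ln 4" using ln_realpow[of 4 2] by simp
        ultimately show ?thesis by (intro mult_left_mono) auto
      qed
      also have "\<dots> = ln (16^t)" by (simp add: ln_realpow)
      finally show "(real q ^ 5) ^ s0 \<le> 16^t" using qpos by (simp add: ln_le_cancel_iff)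
      show "(exp 1 * real mm / real t)^t \<le> ((1/16) * (real q / L))^t"
      proof (intro power_mono)
        have tp: "0 < real t" using tpos by simp
        have "exp 1 * real mm / real t \<le> exp 1 * real mm / (2^30 * real q * L)"
          using tge qpos L1 tpos by (intro divide_left_mono) auto
        also have "\<dots> = exp 1 / 64 * (real q / L)" using qpos L1 by (simp add: mmr power2_eq_square field_simps)
        also have "\<dots> \<le> (1/16) * (real q / L)" using exp_le qpos L1 by (intro mult_right_mono) auto
        finally show "exp 1 * real mm / real t \<le> (1/16) * (real q / L)" .
        show "0 \<le> exp 1 * real mm / real t" by simp
      qed
    qed auto
    also have "\<dots> = (real q / L)^t" by (simp add: power_mult_distrib[symmetric])
    finally show ?thesis .
  qed
  show "let t = nat \<lceil>2^30 * real q * (ln (real q))^2\<rceil> in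
        real (card {S. independent_set V E S \<and> card S = t})
          \<le> (real q / (ln (real q))^2) ^ t"
    using goal IS_eq by (simp add: t_def L_def Let_def)
qed

end
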